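(* Consider an execution $\gamma_0\gamma_1\ldots$ of the unison dynamics with $\gamma_0$ satisfying $WU_0$, and let $\bot_0$, $\widetilde{p^t.r}$, $t_{p,k}$ be as in the context. Let $k\ge\bot_0+D$ be an integer and let $(p,t)$ be an event such that $t_{p,k}$ is defined and $t\ge t_{p,k}$. Then $V\big(p,\widetilde{p^t.r}-k\big)\subseteq Cover(p,t)$.
   Context: Let $G=(V,E)$ be a finite connected undirected graph, $|V|=n\ge 2$, $\mathcal N_p$ the set of neighbors of $p$, $d(p,q)$ the hop distance, $D$ the diameter, and $V(p,r)=\{q\in V: d(p,q)\le r\}$. Fix an integer $M\ge 3$; for an integer $a$, $\bar a\in\{0,\dots,M-1\}$ denotes its residue modulo $M$. Each process $p$ holds a clock $p.r\in\{0,\dots,M-1\}$; $p^t.r$ denotes its value in configuration $\gamma_t$. Integers $a,b$ are locally comparable if $\min(\overline{a-b},\overline{b-a})\le 1$, and then $b\ominus a=\overline{b-a}$ if $\overline{b-a}\le 1$, and $b\ominus a=-\overline{a-b}$ otherwise. A configuration satisfies $WU$ if for every edge $\{p,q\}$, $p.r$ and $q.r$ are locally comparable. The delay of a path $\mu=p_0p_1\ldots p_k$ is $\delta_\mu=\sum_{i=0}^{k-1}(p_{i+1}.r\ominus p_i.r)$ ($0$ if $k=0$). A configuration satisfies $WU_0$ if it satisfies $WU$ and the delay is intrinsic: for all $p,q$, all paths from $p$ to $q$ have the same delay, denoted $\delta_{(p,q)}$ ($\delta^t_{(p,q)}$ in $\gamma_t$). Dynamics: a process $p$ is enabled iff for every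 $q\in\mathcal N_p$, $q.r=p.r$ or $q.r=\overline{p.r+1}$. In a transition $\gamma_t\to\gamma_{t+1}$ a nonempty set of processes enabled in $\gamma_t$ is chosen (by an arbitrary, possibly unfair, daemon) and each of them sets $p.r:=\overline{p.r+1}$; other clocks are unchanged. Events: $(p,0)$ is an event for every $p$; $(p,t+1)$ is an event iff $p$ increments in $\gamma_t\to\gamma_{t+1}$. Causal relation $\leadsto$: for an event $(p,t)$ with $t>0$, $(p,t')\leadsto(p,t)$ where $t'$ is the largest time $<t$ such that $(p,t')$ is an event, and for each $q\in\mathcal N_p$, $(q,t')\leadsto(p,t)$ where $t'$ is the largest time $<t$ such that $(q,t')$ is an event. $\preceq$ is the reflexive–transitive closure of $\leadsto$. $Cover(p,t)$ is the set of processes $q$ such that some event $(q,t')$ satisfies $(q,t')\preceq(p,t)$. Lifting: assume $\gamma_0$ satisfies $WU_0$. Choose $p_0$ with $\delta^0_{(p_0,q)}\ge 0$ for all $q\in V$, and let $\bot_0=p_0^0.r$. Define integers $\widetilde{p^t.r}$ by $\widetilde{p^0.r}=\bot_0+\delta^0_{(p_0,p)}$, and $\widetilde{p^{t+1}.r}=\widetilde{p^t.r}+1$ if $p$ increments in $\gamma_t\to\gamma_{t+1}$, $\widetilde{p^{t+1}.r}=\widetilde{p^t.r}$ otherwise. For an integer $k$, $t_{p,k}$ is the smallest $t$ with $\widetilde{p^t.r}=k$. *)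

theory Defs
  imports Main
begin

definition graph :: "'v set \<Rightarrow> ('v \<Rightarrow> 'v \<Rightarrow> bool) \<Rightarrow> bool" where
  "graph V E \<longleftrightarrow> finite V \<and> (\<forall>p q. E p q \<longrightarrow> p \<in> V \<and> q \<in> V) \<and>
     (\<forall>p q. E p q \<longrightarrow> E q p) \<and> (\<forall>p. \<not> E p p)"

definition nbrs :: "('v \<Rightarrow> 'v \<Rightarrow> bool) \<Rightarrow> 'v \<Rightarrow> 'v set" where
  "nbrs E p = {q. E p q}"

definition is_path :: "'v set \<Rightarrow> ('v \<Rightarrow> 'v \<Rightarrow> bool) \<Rightarrow> 'v \<Rightarrow> 'v \<Rightarrow> 'v list \<Rightarrow> bool" where
  "is_path V E p q xs \<longleftrightarrow> xs \<noteq> [] \<and> set xs \<subseteq> V \<and> successively E xs \<and> hd xs = p \<and> last xs = q"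

definition connected_graph :: "'v set \<Rightarrow> ('v \<Rightarrow> 'v \<Rightarrow> bool) \<Rightarrow> bool" where
  "connected_graph V E \<longleftrightarrow> (\<forall>p\<in>V. \<forall>q\<in>V. \<exists>xs. is_path V E p q xs)"

definition hop_dist :: "'v set \<Rightarrow> ('v \<Rightarrow> 'v \<Rightarrow> bool) \<Rightarrow> 'v \<Rightarrow> 'v \<Rightarrow> nat" where
  "hop_dist V E p q = (LEAST k. \<exists>xs. is_path V E p q xs \<and> length xs = Suc k)"

definition diameter :: "'v set \<Rightarrow> ('v \<Rightarrow> 'v \<Rightarrow> bool) \<Rightarrow> nat" where
  "diameter V E = Max {hop_dist V E p q | p q. p \<in> V \<and> q \<in> V}"

text \<open>V(p,r) for an integer radius r (empty if r < 0).\<close>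
definition ball_set :: "'v set \<Rightarrow> ('v \<Rightarrow> 'v \<Rightarrow> bool) \<Rightarrow> 'v \<Rightarrow> int \<Rightarrow> 'v set" where
  "ball_set V E p r = {q \<in> V. int (hop_dist V E p q) \<le> r}"

type_synonym 'v config = "'v \<Rightarrow> int"

definition loc_comp :: "int \<Rightarrow> int \<Rightarrow> int \<Rightarrow> bool" where
  "loc_comp M a b \<longleftrightarrow> min ((a - b) mod M) ((b - a) mod M) \<le> 1"

definition ominus :: "int \<Rightarrow> int \<Rightarrow> int \<Rightarrow> int" where
  "ominus M b a = (if (b - a) mod M \<le> 1 then (b - a) mod M else - ((a - b) mod M))"

definition WU :: "int \<Rightarrow> ('v \<Rightarrow> 'v \<Rightarrow> bool) \<Rightarrow> 'v config \<Rightarrow> bool" where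
  "WU M E c \<longleftrightarrow> (\<forall>p q. E p q \<longrightarrow> loc_comp M (c p) (c q))"

definition delay :: "int \<Rightarrow> 'v config \<Rightarrow> 'v list \<Rightarrow> int" where
  "delay M c xs = sum_list (map (\<lambda>(a, b). ominus M (c b) (c a)) (zip xs (tl xs)))"

definition WU0 :: "int \<Rightarrow> 'v set \<Rightarrow> ('v \<Rightarrow> 'v \<Rightarrow> bool) \<Rightarrow> 'v config \<Rightarrow> bool" where
  "WU0 M V E c \<longleftrightarrow> WU M E c \<and>
     (\<forall>p q xs ys. is_path V E p q xs \<longrightarrow> is_path V E p q ys \<longrightarrow> delay M c xs = delay M c ys)"

text \<open>Intrinsic delay \<delta>_(p,q) (meaningful under WU0 and connectivity).\<close>
definition idelay :: "int \<Rightarrow> 'v set \<Rightarrow> ('v \<Rightarrow> 'v \<Rightarrow> bool) \<Rightarrow> 'v config \<Rightarrow> 'v \<Rightarrow> 'v \<Rightarrow> int" where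
  "idelay M V E c p q = (THE d. \<exists>xs. is_path V E p q xs \<and> delay M c xs = d)"

definition enabled :: "int \<Rightarrow> ('v \<Rightarrow> 'v \<Rightarrow> bool) \<Rightarrow> 'v config \<Rightarrow> 'v \<Rightarrow> bool" where
  "enabled M E c p \<longleftrightarrow> (\<forall>q \<in> nbrs E p. c q = c p \<or> c q = (c p + 1) mod M)"

definition step :: "int \<Rightarrow> 'v set \<Rightarrow> ('v \<Rightarrow> 'v \<Rightarrow> bool) \<Rightarrow> 'v config \<Rightarrow> 'v config \<Rightarrow> bool" where
  "step M V E c c' \<longleftrightarrow> (\<exists>S. S \<noteq> {} \<and> S \<subseteq> V \<and> (\<forall>p\<in>S. enabled M E c p) \<and>
      c' = (\<lambda>p. if p \<in> S then (c p + 1) mod M else c p))"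

definition execution :: "int \<Rightarrow> 'v set \<Rightarrow> ('v \<Rightarrow> 'v \<Rightarrow> bool) \<Rightarrow> (nat \<Rightarrow> 'v config) \<Rightarrow> bool" where
  "execution M V E \<gamma> \<longleftrightarrow> (\<forall>p\<in>V. 0 \<le> \<gamma> 0 p \<and> \<gamma> 0 p < M) \<and> (\<forall>t. step M V E (\<gamma> t) (\<gamma> (Suc t)))"

text \<open>p increments in \<gamma>_t \<rightarrow> \<gamma>_(t+1) (M \<ge> 3, so incrementing changes the clock).\<close>
definition incr :: "(nat \<Rightarrow> 'v config) \<Rightarrow> nat \<Rightarrow> 'v \<Rightarrow> bool" where
  "incr \<gamma> t p \<longleftrightarrow> \<gamma> (Suc t) p \<noteq> \<gamma> t p"

definition is_event :: "(nat \<Rightarrow> 'v config) \<Rightarrow> 'v \<Rightarrow> nat \<Rightarrow> bool" where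
  "is_event \<gamma> p t \<longleftrightarrow> t = 0 \<or> (\<exists>s. t = Suc s \<and> incr \<gamma> s p)"

definition last_event :: "(nat \<Rightarrow> 'v config) \<Rightarrow> 'v \<Rightarrow> nat \<Rightarrow> nat" where
  "last_event \<gamma> q t = (GREATEST t'. t' < t \<and> is_event \<gamma> q t')"

definition leadsto :: "('v \<Rightarrow> 'v \<Rightarrow> bool) \<Rightarrow> (nat \<Rightarrow> 'v config) \<Rightarrow> 'v \<times> nat \<Rightarrow> 'v \<times> nat \<Rightarrow> bool" where
  "leadsto E \<gamma> e e' \<longleftrightarrow> (case e of (q, t') \<Rightarrow> case e' of (p, t) \<Rightarrow>
      0 < t \<and> is_event \<gamma> p t \<and> (q = p \<or> q \<in> nbrs E p) \<and> t' = last_event \<gamma> q t)"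

definition causal_le :: "('v \<Rightarrow> 'v \<Rightarrow> bool) \<Rightarrow> (nat \<Rightarrow> 'v config) \<Rightarrow> 'v \<times> nat \<Rightarrow> 'v \<times> nat \<Rightarrow> bool" where
  "causal_le E \<gamma> = (leadsto E \<gamma>)\<^sup>*\<^sup>*"

definition Cover :: "'v set \<Rightarrow> ('v \<Rightarrow> 'v \<Rightarrow> bool) \<Rightarrow> (nat \<Rightarrow> 'v config) \<Rightarrow> 'v \<Rightarrow> nat \<Rightarrow> 'v set" where
  "Cover V E \<gamma> p t = {q \<in> V. \<exists>t'. is_event \<gamma> q t' \<and> causal_le E \<gamma> (q, t') (p, t)}"

text \<open>lifted M V E \<gamma> p0 p t = the integer \<widetilde>{p^t.r}, with \<bottom>_0 = \<gamma> 0 p0.\<close>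
definition lifted :: "int \<Rightarrow> 'v set \<Rightarrow> ('v \<Rightarrow> 'v \<Rightarrow> bool) \<Rightarrow> (nat \<Rightarrow> 'v config) \<Rightarrow> 'v \<Rightarrow> 'v \<Rightarrow> nat \<Rightarrow> int" where
  "lifted M V E \<gamma> p0 p t = \<gamma> 0 p0 + idelay M V E (\<gamma> 0) p0 p + int (card {s. s < t \<and> incr \<gamma> s p})"

definition t_first :: "int \<Rightarrow> 'v set \<Rightarrow> ('v \<Rightarrow> 'v \<Rightarrow> bool) \<Rightarrow> (nat \<Rightarrow> 'v config) \<Rightarrow> 'v \<Rightarrow> 'v \<Rightarrow> int \<Rightarrow> nat" where
  "t_first M V E \<gamma> p0 p k = (LEAST t. lifted M V E \<gamma> p0 p t = k)"

end

theory Submission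
  imports Defs
begin

lemma delay_single[simp]: "delay M c [a] = 0"
  by (simp add: delay_def)

lemma delay_Cons2[simp]: "delay M c (a # b # rest) = ominus M (c b) (c a) + delay M c (b # rest)"
  by (simp add: delay_def)

lemma delay_snoc: "xs \<noteq> [] \<Longrightarrow> delay M c (xs @ [y]) = delay M c xs + ominus M (c y) (c (last xs))"
proof (induction xs)
  case Nil then show ?case by simp
next
  case (Cons a xs)
  show ?case
  proof (cases xs)
    case Nil then show ?thesis by simp
  next
    case (Cons b rest)
    then show ?thesis using Cons.IH by simp
  qed
qed

lemma ominus_cong: "\<exists>j. ominus M b a = b - a + M * j"
proof (cases "(b - a) mod M \<le> 1")
  case True
  then have "ominus M b a = b - a + M * (- ((b - a) div M))"
    by (simp add: ominus_def minus_div_mult_eq_mod[symmetric] algebra_simps)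
  then show ?thesis by blast
next
  case False
  then have "ominus M b a = b - a + M * ((a - b) div M)"
    by (simp add: ominus_def minus_div_mult_eq_mod[symmetric] algebra_simps)
  then show ?thesis by blast
qed

lemma delay_cong: "xs \<noteq> [] \<Longrightarrow> \<exists>j. delay M c xs = c (last xs) - c (hd xs) + M * j"
proof (induction xs)
  case Nil then show ?case by simp
next
  case (Cons a xs)
  show ?case
  proof (cases xs)
    case Nil then show ?thesis by (intro exI[of _ 0]) simp
  next
    case (Cons b rest)
    obtain j where j: "delay M c xs = c (last xs) - c (hd xs) + M * j" using Cons.IH Cons by auto
    obtain i where i: "ominus M (c b) (c a) = c b - c a + M * i" using ominus_cong by blast
    have "delay M c (a # xs) = c (last (a # xs)) - c (hd (a # xs)) + M * (i + j)"
      using i j Cons by (simp add: algebra_simps)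
    then show ?thesis by blast
  qed
qed

lemma ominus_le1: "M > 0 \<Longrightarrow> ominus M b a \<le> 1"
proof -
  assume "M > 0"
  then have "0 \<le> (a - b) mod M" by simp
  then show ?thesis by (simp add: ominus_def)
qed

lemma ominus_ge: "M > 0 \<Longrightarrow> loc_comp M a b \<Longrightarrow> ominus M b a \<ge> -1"
proof -
  assume "M > 0" "loc_comp M a b"
  then have "0 \<le> (a - b) mod M" "0 \<le> (b - a) mod M" by simp_all
  then show ?thesis using \<open>loc_comp M a b\<close>
    unfolding ominus_def loc_comp_def by (auto simp: min_def split: if_splits)
qed

lemma delay_le: "M > 0 \<Longrightarrow> xs \<noteq> [] \<Longrightarrow> delay M c xs \<le> int (length xs) - 1"
proof (induction xs)
  case Nil then show ?case by simp
next
  case (Cons a xs)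
  show ?case
  proof (cases xs)
    case Nil then show ?thesis by simp
  next
    case (Cons b rest)
    then show ?thesis using Cons.IH ominus_le1[OF Cons.prems(1), of "c b" "c a"] Cons.prems by simp
  qed
qed

lemma dvd_small: "(M::int) \<ge> 3 \<Longrightarrow> \<bar>d\<bar> \<le> 2 \<Longrightarrow> M dvd d \<Longrightarrow> d = 0"
proof -
  assume a: "M \<ge> 3" "\<bar>d\<bar> \<le> 2" "M dvd d"
  then obtain j where d: "d = M * j" by (auto elim: dvdE)
  show "d = 0"
  proof (rule ccontr)
    assume "d \<noteq> 0"
    then have "\<bar>j\<bar> \<ge> 1" using d by auto
    then have "M * \<bar>j\<bar> \<ge> M * 1" using a by (intro mult_left_mono) auto
    moreover have "\<bar>d\<bar> = M * \<bar>j\<bar>" using d a by (simp add: abs_mult)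
    ultimately show False using a by linarith
  qed
qed

lemma enabled_le:
  assumes "M \<ge> 3" "c p = a mod M" "c q = b mod M" "\<bar>a - b\<bar> \<le> 1" "enabled M E c p" "E p q"
  shows "a \<le> b"
proof -
  have "c q = c p \<or> c q = (c p + 1) mod M" using assms(5,6) by (auto simp: enabled_def nbrs_def)
  then show ?thesis
  proof
    assume "c q = c p"
    then have "M dvd b - a" using assms(2,3) by (simp add: mod_eq_dvd_iff)
    moreover have "\<bar>b - a\<bar> \<le> 2" using assms(4) by linarith
    ultimately have "b - a = 0" using dvd_small[OF assms(1)] by blast
    then show ?thesis by simp
  next
    assume "c q = (c p + 1) mod M"
    then have "b mod M = (a + 1) mod M" using assms(2,3) by (simp add: mod_add_left_eq)
    then have "M dvd b - (a + 1)" by (simp add: mod_eq_dvd_iff)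
    moreover have "\<bar>b - (a + 1)\<bar> \<le> 2" using assms(4) by linarith
    ultimately have "b - (a + 1) = 0" using dvd_small[OF assms(1)] by blast
    then show ?thesis by simp
  qed
qed

lemma path_snoc: "is_path V E p q xs \<Longrightarrow> E q y \<Longrightarrow> y \<in> V \<Longrightarrow> is_path V E p y (xs @ [y])"
  by (auto simp: is_path_def successively_append_iff)

lemma hop_dist_le: "is_path V E p q xs \<Longrightarrow> hop_dist V E p q \<le> length xs - 1"
  unfolding hop_dist_def
  by (rule Least_le) (auto simp: is_path_def)

lemma hop_dist_ex: "connected_graph V E \<Longrightarrow> p \<in> V \<Longrightarrow> q \<in> V \<Longrightarrow>
   \<exists>xs. is_path V E p q xs \<and> length xs = Suc (hop_dist V E p q)"
proof -
  assume a: "connected_graph V E" "p \<in> V" "q \<in> V"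
  then obtain xs where xs: "is_path V E p q xs" by (auto simp: connected_graph_def)
  then have "\<exists>k xs. is_path V E p q xs \<and> length xs = Suc k"
    by (intro exI[of _ "length xs - 1"] exI[of _ xs]) (auto simp: is_path_def)
  then show ?thesis unfolding hop_dist_def by (rule LeastI_ex)
qed

lemma hop_dist_zero: "connected_graph V E \<Longrightarrow> p \<in> V \<Longrightarrow> q \<in> V \<Longrightarrow> hop_dist V E p q = 0 \<Longrightarrow> p = q"
  using hop_dist_ex[of V E p q] by (auto simp: is_path_def length_Suc_conv)

lemma hop_dist_step: "connected_graph V E \<Longrightarrow> p \<in> V \<Longrightarrow> q \<in> V \<Longrightarrow> hop_dist V E p q = Suc n \<Longrightarrow>
   \<exists>q'. E p q' \<and> q' \<in> V \<and> hop_dist V E q' q \<le> n"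
proof -
  assume a: "connected_graph V E" "p \<in> V" "q \<in> V" "hop_dist V E p q = Suc n"
  then obtain xs where xs: "is_path V E p q xs" "length xs = Suc (Suc n)" using hop_dist_ex by metis
  then obtain q' rest where r: "xs = p # q' # rest"
    by (auto simp: is_path_def length_Suc_conv)
  have "is_path V E q' q (q' # rest)" using xs r by (auto simp: is_path_def)
  then have "hop_dist V E q' q \<le> n" using hop_dist_le xs r by fastforce
  moreover have "E p q'" "q' \<in> V" using xs r by (auto simp: is_path_def)
  ultimately show ?thesis by blast
qed

lemma hop_le_diam: "finite V \<Longrightarrow> p \<in> V \<Longrightarrow> q \<in> V \<Longrightarrow> hop_dist V E p q \<le> diameter V E"
proof -
  assume a: "finite V" "p \<in> V" "q \<in> V"
  have "{hop_dist V E p q | p q. p \<in> V \<and> q \<in> V} = (\<lambda>(p,q). hop_dist V E p q) ` (V \<times> V)" by auto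
  then have "finite {hop_dist V E p q | p q. p \<in> V \<and> q \<in> V}" using a by simp
  then show ?thesis unfolding diameter_def by (rule Max_ge) (use a in auto)
qed

locale unison =
  fixes V :: "'v set" and E :: "'v \<Rightarrow> 'v \<Rightarrow> bool" and M :: int
    and \<gamma> :: "nat \<Rightarrow> 'v config" and p0 :: 'v
  assumes G: "graph V E" and C: "connected_graph V E" and M3: "M \<ge> 3"
    and X: "execution M V E \<gamma>" and W: "WU0 M V E (\<gamma> 0)" and P0: "p0 \<in> V"
begin

abbreviation L where "L q t \<equiv> lifted M V E \<gamma> p0 q t"

lemma Mpos: "M > 0" using M3 by simp

lemma edgeV: "E p q \<Longrightarrow> p \<in> V \<and> q \<in> V" using G by (auto simp: graph_def)

lemma idelay_eq: "is_path V E p0 q xs \<Longrightarrow> idelay M V E (\<gamma> 0) p0 q = delay M (\<gamma> 0) xs"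
proof -
  assume xs: "is_path V E p0 q xs"
  have uq: "\<And>ys. is_path V E p0 q ys \<Longrightarrow> delay M (\<gamma> 0) ys = delay M (\<gamma> 0) xs"
    using W xs unfolding WU0_def by blast
  show ?thesis unfolding idelay_def
  proof (rule the_equality)
    show "\<exists>ys. is_path V E p0 q ys \<and> delay M (\<gamma> 0) ys = delay M (\<gamma> 0) xs" using xs by blast
  next
    fix d assume "\<exists>ys. is_path V E p0 q ys \<and> delay M (\<gamma> 0) ys = d"
    then show "d = delay M (\<gamma> 0) xs" using uq by blast
  qed
qed

lemma L_Suc: "L q (Suc t) = L q t + (if incr \<gamma> t q then 1 else 0)"
proof -
  show ?thesis
  proof (cases "incr \<gamma> t q")
    case True
    then have "{s. s < Suc t \<and> incr \<gamma> s q} = insert t {s. s < t \<and> incr \<gamma> s q}"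
      by (auto simp: less_Suc_eq)
    moreover have "card (insert t {s. s < t \<and> incr \<gamma> s q}) = Suc (card {s. s < t \<and> incr \<gamma> s q})"
      by (rule card_insert_disjoint) auto
    ultimately show ?thesis using True unfolding lifted_def by simp
  next
    case False
    then have "{s. s < Suc t \<and> incr \<gamma> s q} = {s. s < t \<and> incr \<gamma> s q}"
      by (auto simp: less_Suc_eq)
    then show ?thesis using False unfolding lifted_def by simp
  qed
qed

lemma L_const: "m \<le> n \<Longrightarrow> (\<forall>u. m \<le> u \<and> u < n \<longrightarrow> \<not> incr \<gamma> u q) \<Longrightarrow> L q n = L q m"
proof (induction n)
  case 0 then show ?case by simp
next
  case (Suc n)
  show ?case
  proof (cases "m = Suc n")
    case True then show ?thesis by simp
  next
    case False
    then have "m \<le> n" using Suc.prems by simp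
    then show ?thesis using Suc.IH Suc.prems L_Suc[of q n] by simp
  qed
qed

lemma L0_le: "q \<in> V \<Longrightarrow> L q 0 \<le> \<gamma> 0 p0 + int (diameter V E)"
proof -
  assume q: "q \<in> V"
  obtain xs where xs: "is_path V E p0 q xs" "length xs = Suc (hop_dist V E p0 q)"
    using hop_dist_ex[OF C P0 q] by blast
  have xsne: "xs \<noteq> []" using xs by (auto simp: is_path_def)
  have "delay M (\<gamma> 0) xs \<le> int (length xs) - 1"
    using delay_le[OF Mpos xsne] .
  moreover have "hop_dist V E p0 q \<le> diameter V E"
    using hop_le_diam G P0 q by (auto simp: graph_def)
  ultimately show ?thesis using idelay_eq[OF xs(1)] xs(2) by (simp add: lifted_def)
qed

lemma step_at: "\<exists>S. S \<subseteq> V \<and> (\<forall>p\<in>S. enabled M E (\<gamma> t) p) \<and>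
      \<gamma> (Suc t) = (\<lambda>p. if p \<in> S then (\<gamma> t p + 1) mod M else \<gamma> t p)"
  using X unfolding execution_def step_def by blast

lemma incr_enabled: "incr \<gamma> s p \<Longrightarrow> enabled M E (\<gamma> s) p"
  using step_at[of s] by (auto simp: incr_def)

lemma init: "p \<in> V \<Longrightarrow> \<gamma> 0 p = L p 0 mod M"
proof -
  assume p: "p \<in> V"
  obtain xs where xs: "is_path V E p0 p xs" using C P0 p by (auto simp: connected_graph_def)
  obtain j where j: "delay M (\<gamma> 0) xs = \<gamma> 0 p - \<gamma> 0 p0 + M * j"
    using delay_cong[of xs M "\<gamma> 0"] xs by (auto simp: is_path_def)
  have "L p 0 = \<gamma> 0 p + M * j" using idelay_eq[OF xs] j by (simp add: lifted_def)
  moreover have "0 \<le> \<gamma> 0 p" "\<gamma> 0 p < M" using X p by (auto simp: execution_def)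
  ultimately show ?thesis by simp
qed

lemma init_edge: "E p q \<Longrightarrow> \<bar>L p 0 - L q 0\<bar> \<le> 1"
proof -
  assume e: "E p q"
  then have pq: "p \<in> V" "q \<in> V" using edgeV by auto
  obtain xs where xs: "is_path V E p0 p xs" using C P0 pq by (auto simp: connected_graph_def)
  have xs2: "is_path V E p0 q (xs @ [q])" using path_snoc[OF xs e pq(2)] .
  have "delay M (\<gamma> 0) (xs @ [q]) = delay M (\<gamma> 0) xs + ominus M (\<gamma> 0 q) (\<gamma> 0 p)"
    using delay_snoc[of xs M "\<gamma> 0" q] xs by (auto simp: is_path_def)
  moreover have "loc_comp M (\<gamma> 0 p) (\<gamma> 0 q)" using W e by (auto simp: WU0_def WU_def)
  ultimately show ?thesis
    using idelay_eq[OF xs] idelay_eq[OF xs2] ominus_le1[OF Mpos, of "\<gamma> 0 q" "\<gamma> 0 p"]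
      ominus_ge[OF Mpos, of "\<gamma> 0 p" "\<gamma> 0 q"]
    by (simp add: lifted_def)
qed

lemma invariant: "(\<forall>p\<in>V. \<gamma> t p = L p t mod M) \<and> (\<forall>p q. E p q \<longrightarrow> \<bar>L p t - L q t\<bar> \<le> 1)"
proof (induction t)
  case 0 then show ?case using init init_edge by auto
next
  case (Suc t)
  obtain S where S: "S \<subseteq> V" "\<forall>p\<in>S. enabled M E (\<gamma> t) p"
      "\<gamma> (Suc t) = (\<lambda>p. if p \<in> S then (\<gamma> t p + 1) mod M else \<gamma> t p)"
    using step_at[of t] by blast
  have inc: "incr \<gamma> t p \<longleftrightarrow> p \<in> S" for p
  proof
    assume "incr \<gamma> t p" then show "p \<in> S" using S(3) by (auto simp: incr_def split: if_splits)
  next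
    assume pS: "p \<in> S"
    then have "\<gamma> t p = L p t mod M" using Suc.IH S(1) by auto
    then have r: "0 \<le> \<gamma> t p" "\<gamma> t p < M" using Mpos by auto
    have "(\<gamma> t p + 1) mod M \<noteq> \<gamma> t p"
    proof (cases "\<gamma> t p + 1 < M")
      case True then show ?thesis using r by simp
    next
      case False
      then have "\<gamma> t p + 1 = M" using r by simp
      then show ?thesis using M3 by simp
    qed
    then show "incr \<gamma> t p" using S(3) pS by (simp add: incr_def)
  qed
  have A: "\<forall>p\<in>V. \<gamma> (Suc t) p = L p (Suc t) mod M"
  proof
    fix p assume p: "p \<in> V"
    show "\<gamma> (Suc t) p = L p (Suc t) mod M"
      using Suc.IH p S(3) inc[of p] L_Suc[of p t] by (auto simp: mod_add_left_eq)
  qed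
  have B: "\<bar>L p (Suc t) - L q (Suc t)\<bar> \<le> 1" if e: "E p q" for p q
  proof -
    have pq: "p \<in> V" "q \<in> V" using edgeV e by auto
    have d: "\<bar>L p t - L q t\<bar> \<le> 1" using Suc.IH e by auto
    have e': "E q p" using G e by (auto simp: graph_def)
    have gp: "\<gamma> t p = L p t mod M" and gq: "\<gamma> t q = L q t mod M" using Suc.IH pq by auto
    show ?thesis
    proof (cases "p \<in> S"; cases "q \<in> S")
      assume "p \<in> S" "q \<notin> S"
      then have en: "enabled M E (\<gamma> t) p" using S(2) by auto
      have "L p t \<le> L q t" using enabled_le[OF M3 gp gq d en e] .
      then show ?thesis using d L_Suc[of p t] L_Suc[of q t] inc[of p] inc[of q] \<open>p \<in> S\<close> \<open>q \<notin> S\<close> by auto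
    next
      assume "p \<notin> S" "q \<in> S"
      have d': "\<bar>L q t - L p t\<bar> \<le> 1" using d by linarith
      have en: "enabled M E (\<gamma> t) q" using S(2) \<open>q \<in> S\<close> by auto
      have "L q t \<le> L p t" using enabled_le[OF M3 gq gp d' en e'] .
      then show ?thesis using d L_Suc[of p t] L_Suc[of q t] inc[of p] inc[of q] \<open>p \<notin> S\<close> \<open>q \<in> S\<close> by auto
    qed (use d L_Suc[of p t] L_Suc[of q t] inc[of p] inc[of q] in auto)
  qed
  show ?case using A B by blast
qed

lemma last_event_props:
  assumes "0 < t"
  shows "last_event \<gamma> q t < t" "is_event \<gamma> q (last_event \<gamma> q t)"
    "\<And>u. is_event \<gamma> q u \<Longrightarrow> u < t \<Longrightarrow> u \<le> last_event \<gamma> q t"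
proof -
  have ex: "0 < t \<and> is_event \<gamma> q 0" using assms by (simp add: is_event_def)
  have b: "\<And>y. y < t \<and> is_event \<gamma> q y \<Longrightarrow> y \<le> t" by simp
  have "last_event \<gamma> q t < t \<and> is_event \<gamma> q (last_event \<gamma> q t)"
    unfolding last_event_def by (rule GreatestI_nat[where P="\<lambda>y. y < t \<and> is_event \<gamma> q y", OF ex b])
  then show "last_event \<gamma> q t < t" "is_event \<gamma> q (last_event \<gamma> q t)" by auto
  show "\<And>u. is_event \<gamma> q u \<Longrightarrow> u < t \<Longrightarrow> u \<le> last_event \<gamma> q t"
    unfolding last_event_def by (rule Greatest_le_nat[of _ _ t]) auto
qed

lemma cover:
  assumes k: "k \<ge> \<gamma> 0 p0 + int (diameter V E)"
  shows "p \<in> V \<Longrightarrow> is_event \<gamma> p t \<Longrightarrow> q \<in> V \<Longrightarrow> int (hop_dist V E p q) \<le> L p t - k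
     \<Longrightarrow> q \<in> Cover V E \<gamma> p t"
proof (induction t arbitrary: p q rule: less_induct)
  case (less t)
  show ?case
  proof (cases "q = p")
    case True
    have "causal_le E \<gamma> (p, t) (p, t)" by (simp add: causal_le_def)
    then show ?thesis unfolding Cover_def using True less.prems(1,2) by blast
  next
    case False
    then obtain n where n: "hop_dist V E p q = Suc n"
      using hop_dist_zero[OF C less.prems(1) less.prems(3)] by (cases "hop_dist V E p q") auto
    then obtain q' where q': "E p q'" "q' \<in> V" "hop_dist V E q' q \<le> n"
      using hop_dist_step[OF C less.prems(1) less.prems(3)] by blast
    have h1: "L p t > k" using less.prems(4) n by simp
    have h2: "L p 0 \<le> k" using L0_le[OF less.prems(1)] k by simp
    have "t \<noteq> 0"
    proof
      assume "t = 0" with h1 h2 show False by simp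
    qed
    then obtain s where s: "t = Suc s" "incr \<gamma> s p" using less.prems(2) by (auto simp: is_event_def)
    define t' where "t' = last_event \<gamma> q' t"
    have t': "t' < t" "is_event \<gamma> q' t'" "\<And>u. is_event \<gamma> q' u \<Longrightarrow> u < t \<Longrightarrow> u \<le> t'"
      using last_event_props[of t q'] s unfolding t'_def by auto
    have "L q' s = L q' t'"
    proof (rule L_const)
      show "t' \<le> s" using t' s by simp
      show "\<forall>u. t' \<le> u \<and> u < s \<longrightarrow> \<not> incr \<gamma> u q'"
      proof (intro allI impI)
        fix u assume u: "t' \<le> u \<and> u < s"
        show "\<not> incr \<gamma> u q'"
        proof
          assume "incr \<gamma> u q'"
          then have "is_event \<gamma> q' (Suc u)" by (simp add: is_event_def)
          then have "Suc u \<le> t'" using t'(3) u s by simp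
          then show False using u by simp
        qed
      qed
    qed
    moreover have "L p s \<le> L q' s"
    proof -
      have inv: "\<gamma> s p = L p s mod M" "\<gamma> s q' = L q' s mod M" "\<bar>L p s - L q' s\<bar> \<le> 1"
        using invariant[of s] less.prems(1) q' by auto
      show ?thesis using enabled_le[OF M3 inv incr_enabled[OF s(2)] q'(1)] .
    qed
    moreover have "L p t = L p s + 1" using L_Suc[of p s] s by simp
    ultimately have "int (hop_dist V E q' q) \<le> L q' t' - k" using less.prems(4) n q'(3) by simp
    then have "q \<in> Cover V E \<gamma> q' t'" using less.IH[OF t'(1) q'(2) t'(2) less.prems(3)] by blast
    then obtain t'' where t'': "is_event \<gamma> q t''" "causal_le E \<gamma> (q, t'') (q', t')"
      using less.prems(3) by (auto simp: Cover_def)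
    have "leadsto E \<gamma> (q', t') (p, t)"
      using s less.prems(2) q'(1) by (simp add: leadsto_def nbrs_def t'_def)
    then have "causal_le E \<gamma> (q, t'') (p, t)" using t''(2)
      unfolding causal_le_def by (rule rtranclp.rtrancl_into_rtrancl[rotated])
    then show ?thesis using t''(1) less.prems(3) by (auto simp: Cover_def)
  qed
qed

end

theorem lemma3:
  fixes V :: "'v set" and E :: "'v \<Rightarrow> 'v \<Rightarrow> bool" and M :: int
    and \<gamma> :: "nat \<Rightarrow> 'v config" and p0 p :: 'v and k :: int and t :: nat
  assumes "graph V E" and "connected_graph V E" and "card V \<ge> 2"
    and "M \<ge> 3"
    and "execution M V E \<gamma>"
    and "WU0 M V E (\<gamma> 0)"
    and "p0 \<in> V" and "\<forall>q\<in>V. idelay M V E (\<gamma> 0) p0 q \<ge> 0"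
    and "k \<ge> \<gamma> 0 p0 + int (diameter V E)"
    and "p \<in> V" and "is_event \<gamma> p t"
    and "\<exists>t'. lifted M V E \<gamma> p0 p t' = k"
    and "t \<ge> t_first M V E \<gamma> p0 p k"
  shows "ball_set V E p (lifted M V E \<gamma> p0 p t - k) \<subseteq> Cover V E \<gamma> p t"
proof -
  interpret unison V E M \<gamma> p0 using assms by unfold_locales auto
  show ?thesis using cover[OF assms(9) assms(10) assms(11)] by (auto simp: ball_set_def)
qed

end
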